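(* Let $\mathscr T$ be a triangulation of $\Pi$ with $\mathscr T_{ijk}^{rst}\subseteq\mathscr T$ for some distinct $i,j,k\in[4]$ and $r,s,t\in\{-N,\dots,N\}$. Let $\mathscr T'$ be the result of a flip on $\mathscr T$ supported on a circuit $(X^+,X^-)$ of $\Pi$ with $X\neq X_{ijk}^{rst}$. Then $\mathscr T_{ijk}^{rst}\subseteq\mathscr T'$.
   Context: General conventions. For a finite point set $A\subset\mathbb R^d$: a cell is a subset of $A$; a simplex is an affinely independent cell; a face of a cell $C$ is a subset $F\subseteq C$ which is the set of minimizers on $C$ of some linear functional. A triangulation of $A$ is a collection $\mathscr T$ of simplices of $A$, closed under taking faces, such that for all $\sigma,\sigma'\in\mathscr T$, $\mathrm{conv}(\sigma)\cap\mathrm{conv}(\sigma')=\mathrm{conv}(F)$ for a common face $F$ of $\sigma$ and $\sigma'$, and such that $\bigcup_{\sigma\in\mathscr T}\mathrm{conv}(\sigma)=\mathrm{conv}(A)$. A circuit is a minimal affinely dependent subset $X$; it satisfies an affine dependence $\sum_{x\in X}\lambda_x x=0$, $\sum\lambda_x=0$, all $\lambda_x\neq0$, unique up to scaling, which partitions $X=X^+\cup X^-$ into the points with positive and with negative coefficients; writing $X=(X^+,X^-)$ fixes a choice of sign. Set $\mathscr T_X^+:=\{\sigma\subseteq X:X^+\not\subseteq\sigma\}$ and $\mathscr T_X^-:=\{\sigma\subseteq X:X^-\not\subseteq\sigma\}$. For $C\in\mathscr T$, $\mathrm{link}_{\mathscr T}(C):=\{C'\in\mathscr T: C\cap C'=\emptyset,\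 C\cup C'\in\mathscr T\}$. A triangulation $\mathscr T$ of $A$ has a flip supported on the circuit $(X^+,X^-)$, $X\subseteq A$, if $\mathscr T_X^+\subseteq\mathscr T$ and all inclusion-maximal elements of $\mathscr T_X^+$ have the same link $\mathscr L$ in $\mathscr T$; the result of the flip is the triangulation $(\mathscr T\setminus\{\rho\cup\sigma:\rho\in\mathscr L,\sigma\in\mathscr T_X^+\})\cup\{\rho\cup\sigma:\rho\in\mathscr L,\sigma\in\mathscr T_X^-\}$. The point set $\Pi$. Let $N\ge1$ and let $e_1,\dots,e_4$ be the standard basis of $\mathbb R^4$. For distinct $i,j\in[4]$ and integers $-N\le r\le N$ introduce symbols $f_{ij}^r$ with the identification $f_{ij}^r=f_{ji}^{-r}$; the distinct symbols $\{f_{ij}^r\}_{1\le i<j\le4,\,-N\le r\le N}$ form the standard basis of $\mathbb R^{6(2N+1)}$. Set $\Pi:=\bigcup_{1\le i<j\le4}\bigcup_{-N\le r\le N}\{(e_i,f_{ij}^r),(e_j,f_{ij}^r)\}$. For distinct $i,j,k\in[4]$ and $r,s,t\in\{-N,\dots,N\}$, $X_{ijk}^{rst}=((X_{ijk}^{rst})^+,(X_{ijk}^{rst})^-)$ is the circuit of $\Pi$ with affine dependence $(e_i,f_{ij}^r)-(e_j,f_{ij}^r)+(e_j,f_{jk}^s)-(e_k,f_{jk}^s)+(e_k,f_{ki}^t)-(e_i,f_{ki}^t)=0$, with $+$ and $-$ parts read off from these signs, and $\mathscr T_{ijk}^{rst}:=\mathscr T^+_{X_{ijk}^{rst}}$.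 *)

theory Defs
  imports "HOL-Analysis.Analysis" "HOL-Library.Function_Algebras"
begin

instantiation "fun" :: (type, real_vector) real_vector
begin
definition scaleR_fun :: "real \<Rightarrow> ('a \<Rightarrow> 'b) \<Rightarrow> 'a \<Rightarrow> 'b"
  where "scaleR_fun c f = (\<lambda>x. c *\<^sub>R f x)"
instance
  by standard (auto simp: scaleR_fun_def fun_eq_iff scaleR_add_right scaleR_add_left)
end

text \<open>The empty set is also admitted as a face (standard convention; needed so that
  disjoint simplices meet in the convex hull of a common face).\<close>
definition is_face :: "'a::real_vector set \<Rightarrow> 'a set \<Rightarrow> bool" where
  "is_face C F \<longleftrightarrow> F = {} \<or>
     (\<exists>l::'a \<Rightarrow> real. linear l \<and> F = {x \<in> C. \<forall>y\<in>C. l x \<le> l y})"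

definition is_simplex :: "'a::real_vector set \<Rightarrow> bool" where
  "is_simplex \<sigma> \<longleftrightarrow> finite \<sigma> \<and> \<not> affine_dependent \<sigma>"

definition is_triangulation :: "'a::real_vector set \<Rightarrow> 'a set set \<Rightarrow> bool" where
  "is_triangulation A T \<longleftrightarrow>
     (\<forall>\<sigma>\<in>T. \<sigma> \<subseteq> A \<and> is_simplex \<sigma>) \<and>
     (\<forall>\<sigma>\<in>T. \<forall>F. is_face \<sigma> F \<longrightarrow> F \<in> T) \<and>
     (\<forall>\<sigma>\<in>T. \<forall>\<sigma>'\<in>T. \<exists>F. is_face \<sigma> F \<and> is_face \<sigma>' F \<and>
         convex hull \<sigma> \<inter> convex hull \<sigma>' = convex hull F) \<and>
     (\<Union>\<sigma>\<in>T. convex hull \<sigma>) = convex hull A"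

definition is_circuit_set :: "'a::real_vector set \<Rightarrow> 'a set \<Rightarrow> bool" where
  "is_circuit_set A X \<longleftrightarrow> X \<subseteq> A \<and> affine_dependent X \<and>
     (\<forall>Y. Y \<subset> X \<longrightarrow> \<not> affine_dependent Y)"

definition is_signed_circuit :: "'a::real_vector set \<Rightarrow> 'a set \<Rightarrow> 'a set \<Rightarrow> bool" where
  "is_signed_circuit A Xp Xm \<longleftrightarrow> is_circuit_set A (Xp \<union> Xm) \<and>
     (\<exists>c::'a \<Rightarrow> real. (\<forall>x\<in>Xp \<union> Xm. c x \<noteq> 0) \<and>
        (\<Sum>x\<in>Xp \<union> Xm. c x) = 0 \<and> (\<Sum>x\<in>Xp \<union> Xm. c x *\<^sub>R x) = 0 \<and>
        Xp = {x \<in> Xp \<union> Xm. c x > 0} \<and> Xm = {x \<in> Xp \<union> Xm. c x < 0})"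

definition T_plus :: "'a set \<Rightarrow> 'a set \<Rightarrow> 'a set set" where
  "T_plus Xp Xm = {\<sigma>. \<sigma> \<subseteq> Xp \<union> Xm \<and> \<not> Xp \<subseteq> \<sigma>}"

definition T_minus :: "'a set \<Rightarrow> 'a set \<Rightarrow> 'a set set" where
  "T_minus Xp Xm = {\<sigma>. \<sigma> \<subseteq> Xp \<union> Xm \<and> \<not> Xm \<subseteq> \<sigma>}"

definition link :: "'a set set \<Rightarrow> 'a set \<Rightarrow> 'a set set" where
  "link T C = {C' \<in> T. C \<inter> C' = {} \<and> C \<union> C' \<in> T}"

definition maximal_in :: "'a set set \<Rightarrow> 'a set \<Rightarrow> bool" where
  "maximal_in S \<sigma> \<longleftrightarrow> \<sigma> \<in> S \<and> (\<forall>\<tau>\<in>S. \<sigma> \<subseteq> \<tau> \<longrightarrow> \<tau> = \<sigma>)"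

definition flip_with_link :: "'a set set \<Rightarrow> 'a set \<Rightarrow> 'a set \<Rightarrow> 'a set set \<Rightarrow> bool" where
  "flip_with_link T Xp Xm L \<longleftrightarrow> T_plus Xp Xm \<subseteq> T \<and>
     (\<forall>\<sigma>. maximal_in (T_plus Xp Xm) \<sigma> \<longrightarrow> link T \<sigma> = L)"

definition flip_result :: "'a set set \<Rightarrow> 'a set \<Rightarrow> 'a set \<Rightarrow> 'a set set \<Rightarrow> 'a set set" where
  "flip_result T Xp Xm L =
     (T - {\<rho> \<union> \<sigma> | \<rho> \<sigma>. \<rho> \<in> L \<and> \<sigma> \<in> T_plus Xp Xm})
       \<union> {\<rho> \<union> \<sigma> | \<rho> \<sigma>. \<rho> \<in> L \<and> \<sigma> \<in> T_minus Xp Xm}"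

text \<open>Coordinates: E i is the basis vector e_i (i \<in> [4]); F i j r with i < j is the
  basis vector f_ij^r. The symbol f_ij^r for i > j is identified with f_ji^(-r).\<close>
datatype coord = E nat | F nat nat int

definition fsym :: "nat \<Rightarrow> nat \<Rightarrow> int \<Rightarrow> coord" where
  "fsym i j r = (if i < j then F i j r else F j i (- r))"

definition pt :: "nat \<Rightarrow> nat \<Rightarrow> nat \<Rightarrow> int \<Rightarrow> coord \<Rightarrow> real" where
  "pt a i j r = (\<lambda>c. if c = E a \<or> c = fsym i j r then 1 else 0)"

definition Pi_set :: "nat \<Rightarrow> (coord \<Rightarrow> real) set" where
  "Pi_set N = {pt a i j r | a i j r. i \<in> {1..4} \<and> j \<in> {1..4} \<and> i < j \<and>
                 \<bar>r\<bar> \<le> int N \<and> (a = i \<or> a = j)}"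

text \<open>The circuit X_ijk^rst with dependence
  (e_i,f_ij^r) - (e_j,f_ij^r) + (e_j,f_jk^s) - (e_k,f_jk^s) + (e_k,f_ki^t) - (e_i,f_ki^t) = 0.\<close>
definition Xp_ijk :: "nat \<Rightarrow> nat \<Rightarrow> nat \<Rightarrow> int \<Rightarrow> int \<Rightarrow> int \<Rightarrow> (coord \<Rightarrow> real) set" where
  "Xp_ijk i j k r s t = {pt i i j r, pt j j k s, pt k k i t}"

definition Xm_ijk :: "nat \<Rightarrow> nat \<Rightarrow> nat \<Rightarrow> int \<Rightarrow> int \<Rightarrow> int \<Rightarrow> (coord \<Rightarrow> real) set" where
  "Xm_ijk i j k r s t = {pt j i j r, pt k j k s, pt i k i t}"

definition T_ijk :: "nat \<Rightarrow> nat \<Rightarrow> nat \<Rightarrow> int \<Rightarrow> int \<Rightarrow> int \<Rightarrow> (coord \<Rightarrow> real) set set" where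
  "T_ijk i j k r s t = T_plus (Xp_ijk i j k r s t) (Xm_ijk i j k r s t)"

end

theory Submission imports Defs begin

lemma fsym_neq_E[simp]: "fsym i j r \<noteq> E a" "E a \<noteq> fsym i j r"
  by (auto simp: fsym_def)

lemma pt_E[simp]: "pt a u v w (E b) = (if b = a then 1 else 0)"
  by (auto simp: pt_def)

lemma pt_fsym[simp]: "pt a i j r (fsym i j r) = 1"
  by (auto simp: pt_def)

lemma pt_sym[simp]: "i \<noteq> j \<Longrightarrow> pt a i j (- r) = pt a j i r"
  by (auto simp: pt_def fsym_def fun_eq_iff)

lemma pt_01: "x \<in> Pi_set N \<Longrightarrow> x q = 0 \<or> x q = 1"
  by (auto simp: Pi_set_def pt_def)

lemma finite_Pi: "finite (Pi_set N)"
proof -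
  have "Pi_set N \<subseteq> (\<lambda>(a,i,j,r). pt a i j r) ` ({1..4} \<times> {1..4} \<times> {1..4} \<times> {-int N..int N})"
    unfolding Pi_set_def by (force simp: image_iff)
  then show ?thesis by (rule finite_subset) auto
qed

lemma sum_fun_apply: "finite X \<Longrightarrow> (\<Sum>x\<in>X. c x *\<^sub>R (x::'a \<Rightarrow> real)) q = (\<Sum>x\<in>X. c x * x q)"
  by (induction X rule: finite_induct) (auto simp: scaleR_fun_def)

lemma pt_fsym_nz:
  assumes "x \<in> Pi_set N" "i \<noteq> j" "x (fsym i j r) \<noteq> 0"
  shows "x = pt i i j r \<or> x = pt j i j r"
proof -
  obtain a u v w where x: "x = pt a u v w" "u < v" "a = u \<or> a = v"
    using assms(1) unfolding Pi_set_def by auto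
  have "fsym i j r = fsym u v w" using assms(3) x by (auto simp: pt_def split: if_splits)
  then have e: "pt a u v w = pt a i j r" by (simp add: pt_def)
  have "F u v w = fsym i j r" using \<open>fsym i j r = fsym u v w\<close> x(2) by (simp add: fsym_def)
  then have "{u,v} = {i,j}" using assms(2) by (auto simp: fsym_def split: if_splits)
  then show ?thesis using x e by auto
qed

lemma f_step:
  assumes XP: "X \<subseteq> Pi_set N" and fin: "finite X" and ij: "i \<noteq> j"
    and s: "(\<Sum>x\<in>X. c x * x (fsym i j r)) = 0" and nz: "\<forall>x\<in>X. c x \<noteq> 0"
    and h: "pt i i j r \<in> X \<or> pt j i j r \<in> X"
  shows "pt i i j r \<in> X \<and> pt j i j r \<in> X \<and> c (pt j i j r) = - c (pt i i j r)"
proof -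
  let ?p = "pt i i j r" and ?m = "pt j i j r"
  have pm: "?p \<noteq> ?m"
  proof
    assume "?p = ?m" then have "?p (E i) = ?m (E i)" by simp
    with ij show False by simp
  qed
  have "(\<Sum>x\<in>X. c x * x (fsym i j r)) = (\<Sum>x\<in>X \<inter> {?p,?m}. c x * x (fsym i j r))"
    apply (rule sum.mono_neutral_right[OF fin]) using pt_fsym_nz[OF _ ij] XP by auto
  then have s2: "(\<Sum>x\<in>X \<inter> {?p,?m}. c x * x (fsym i j r)) = 0" using s by simp
  show ?thesis
  proof (cases "?p \<in> X"; cases "?m \<in> X")
    assume a: "?p \<in> X" "?m \<in> X"
    then have "X \<inter> {?p,?m} = {?p,?m}" by auto
    with s2 pm a show ?thesis by simp
  next
    assume a: "?p \<in> X" "?m \<notin> X"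
    then have "X \<inter> {?p,?m} = {?p}" by auto
    with s2 nz a show ?thesis by simp
  next
    assume a: "?p \<notin> X" "?m \<in> X"
    then have "X \<inter> {?p,?m} = {?m}" by auto
    with s2 nz a show ?thesis by simp
  next
    assume a: "?p \<notin> X" "?m \<notin> X"
    with h show ?thesis by simp
  qed
qed

lemma e_step:
  assumes XP: "X \<subseteq> Pi_set N" and fin: "finite X"
    and s: "(\<Sum>x\<in>X. c x * x (E a)) = 0"
    and y: "y \<in> X" "c y > 0" "y (E a) = 1"
    and h: "\<forall>x\<in>X. c x < 0 \<longrightarrow> x (E a) = 1 \<longrightarrow> x = z \<or> x = y"
  shows "z \<in> X \<and> c z < 0"
proof (rule ccontr)
  assume nz: "\<not> (z \<in> X \<and> c z < 0)"
  have "0 < (\<Sum>x\<in>X. c x * x (E a))"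
  proof (rule sum_pos2[OF fin y(1)])
    show "0 < c y * y (E a)" using y by simp
    fix x assume x: "x \<in> X"
    have x01: "x (E a) = 0 \<or> x (E a) = 1" using pt_01[of x N "E a"] XP x by auto
    show "0 \<le> c x * x (E a)"
    proof (cases "c x < 0")
      case True
      then have "x (E a) = 0" using x01 h x nz y by auto
      then show ?thesis by simp
    next
      case False then show ?thesis using x01 by auto
    qed
  qed
  with s show False by simp
qed


lemma cycle:
  assumes XP: "X \<subseteq> Pi_set N" and fin: "finite X"
    and d: "i \<noteq> j" "j \<noteq> k" "i \<noteq> k"
    and sums: "\<forall>q. (\<Sum>x\<in>X. c x * x q) = 0" and nz: "\<forall>x\<in>X. c x \<noteq> 0"
    and neg: "\<forall>x\<in>X. c x < 0 \<longrightarrow> x \<in> Xp_ijk i j k r s t \<union> Xm_ijk i j k r s t"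
    and P1: "pt i i j r \<in> X" "c (pt i i j r) < 0"
  shows "Xp_ijk i j k r s t \<union> Xm_ijk i j k r s t \<subseteq> X"
proof -
  have f1: "pt j i j r \<in> X" "c (pt j i j r) > 0"
    using f_step[OF XP fin d(1), of c r] sums nz P1 by auto
  have "\<forall>x\<in>X. c x < 0 \<longrightarrow> x (E j) = 1 \<longrightarrow> x = pt j j k s \<or> x = pt j i j r"
    using neg d by (auto simp: Xp_ijk_def Xm_ijk_def)
  then have e1: "pt j j k s \<in> X" "c (pt j j k s) < 0"
    using e_step[of X N c j "pt j i j r" "pt j j k s"] XP fin f1 sums by auto
  have f2: "pt k j k s \<in> X" "c (pt k j k s) > 0"
    using f_step[OF XP fin d(2), of c s] sums nz e1 by auto
  have "\<forall>x\<in>X. c x < 0 \<longrightarrow> x (E k) = 1 \<longrightarrow> x = pt k k i t \<or> x = pt k j k s"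
    using neg d by (auto simp: Xp_ijk_def Xm_ijk_def)
  then have e2: "pt k k i t \<in> X" "c (pt k k i t) < 0"
    using e_step[of X N c k "pt k j k s" "pt k k i t"] XP fin f2 sums by auto
  have f3: "pt i k i t \<in> X"
    using f_step[OF XP fin, of k i c t] d sums nz e2 by auto
  show ?thesis using P1 f1 e1 f2 e2 f3 by (auto simp: Xp_ijk_def Xm_ijk_def)
qed


abbreviation six where "six i j k r s t \<equiv> Xp_ijk i j k r s t \<union> Xm_ijk i j k r s t"

lemma six_rot: "six j k i s t r = six i j k r s t"
  by (auto simp: Xp_ijk_def Xm_ijk_def)

lemma six_refl: "i \<noteq> j \<Longrightarrow> j \<noteq> k \<Longrightarrow> i \<noteq> k \<Longrightarrow>
  six j i k (-r) (-t) (-s) = six i j k r s t"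
  by (auto simp: Xp_ijk_def Xm_ijk_def)

lemma all_in:
  assumes XP: "X \<subseteq> Pi_set N" and fin: "finite X"
    and d: "i \<noteq> j" "j \<noteq> k" "i \<noteq> k"
    and sums: "\<forall>q. (\<Sum>x\<in>X. c x * x q) = 0" and nz: "\<forall>x\<in>X. c x \<noteq> 0"
    and neg: "\<forall>x\<in>X. c x < 0 \<longrightarrow> x \<in> six i j k r s t"
    and m: "m \<in> X" "c m < 0" "m \<in> six i j k r s t"
  shows "six i j k r s t \<subseteq> X"
proof -
  have r1: "six j k i s t r = six i j k r s t" by (rule six_rot)
  have r2: "six k i j t r s = six i j k r s t" using six_rot[of k i j t r s] six_rot[of i j k r s t] by simp
  have f1: "six j i k (-r) (-t) (-s) = six i j k r s t" using six_refl d by blast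
  have f2: "six k j i (-s) (-r) (-t) = six i j k r s t" using d by (auto simp: Xp_ijk_def Xm_ijk_def)
  have f3: "six i k j (-t) (-s) (-r) = six i j k r s t" using d by (auto simp: Xp_ijk_def Xm_ijk_def)
  from m(3) consider "m = pt i i j r" | "m = pt j j k s" | "m = pt k k i t"
    | "m = pt j i j r" | "m = pt k j k s" | "m = pt i k i t"
    by (auto simp: Xp_ijk_def Xm_ijk_def)
  then show ?thesis
  proof cases
    case 1 then show ?thesis using cycle[of X N i j k c r s t] XP fin d sums nz neg m by blast
  next
    case 2 then show ?thesis using cycle[of X N j k i c s t r] XP fin d sums nz neg m r1 by simp
  next
    case 3 then show ?thesis using cycle[of X N k i j c t r s] XP fin d sums nz neg m r2 by simp
  next
    case 4 then show ?thesis using cycle[of X N j i k c "-r" "-t" "-s"] XP fin d sums nz neg m f1 by simp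
  next
    case 5 then show ?thesis using cycle[of X N k j i c "-s" "-r" "-t"] XP fin d sums nz neg m f2 by simp
  next
    case 6 then show ?thesis using cycle[of X N i k j c "-t" "-s" "-r"] XP fin d sums nz neg m f3 by simp
  qed
qed

lemma pt_split: "pt a i j r q = (if q = E a then 1 else 0) + (if q = fsym i j r then 1 else 0)"
  by (auto simp: pt_def)

lemma fsym_idx: "fsym i j r = fsym u v w \<Longrightarrow> i \<noteq> j \<Longrightarrow> u \<noteq> v \<Longrightarrow> {i,j} = {u,v}"
  by (auto simp: fsym_def split: if_splits)

lemma six_dep:
  assumes d: "i \<noteq> j" "j \<noteq> k" "i \<noteq> k"
  shows "affine_dependent (six i j k r s t)"
proof -
  let ?S = "six i j k r s t"
  let ?M3 = "pt i k i t"
  let ?H = "affine hull (?S - {?M3})"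
  have ne1: "pt i i j r \<noteq> ?M3"
  proof
    assume "pt i i j r = ?M3"
    then have "pt i i j r (fsym k i t) = ?M3 (fsym k i t)" by simp
    moreover have "fsym k i t \<noteq> fsym i j r" using fsym_idx[of k i t i j r] d by auto
    ultimately show False by (simp add: pt_split)
  qed
  have ne: "pt a u v w \<noteq> ?M3" if "a \<noteq> i" for a u v w
  proof
    assume "pt a u v w = ?M3"
    then have "pt a u v w (E i) = ?M3 (E i)" by simp
    with that show False by simp
  qed
  have A: "affine ?H" by (rule affine_affine_hull)
  have mem: "x \<in> ?H" if "x \<in> ?S" "x \<noteq> ?M3" for x
    using that by (intro hull_inc) auto
  have h1: "pt i i j r \<in> ?H" using ne1 by (intro mem) (auto simp: Xp_ijk_def)
  have h2: "pt j j k s \<in> ?H" using ne d by (intro mem) (auto simp: Xp_ijk_def)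
  have h3: "pt k k i t \<in> ?H" using ne d by (intro mem) (auto simp: Xp_ijk_def)
  have h4: "pt j i j r \<in> ?H" using ne d by (intro mem) (auto simp: Xm_ijk_def)
  have h5: "pt k j k s \<in> ?H" using ne d by (intro mem) (auto simp: Xm_ijk_def)
  have w: "pt i i j r + 1 *\<^sub>R (pt j j k s - pt j i j r) \<in> ?H"
    by (rule mem_affine_3_minus[OF A h1 h2 h4])
  have w2: "(pt i i j r + 1 *\<^sub>R (pt j j k s - pt j i j r)) + 1 *\<^sub>R (pt k k i t - pt k j k s) \<in> ?H"
    by (rule mem_affine_3_minus[OF A w h3 h5])
  have eq: "(pt i i j r + 1 *\<^sub>R (pt j j k s - pt j i j r)) + 1 *\<^sub>R (pt k k i t - pt k j k s) = ?M3"
    by (simp add: fun_eq_iff pt_split)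
  have "?M3 \<in> ?S" by (auto simp: Xm_ijk_def)
  then show ?thesis unfolding affine_dependent_def using w2 eq by auto
qed


theorem proposition4p6:
  fixes N :: nat and i j k :: nat and r s t :: int
    and T T' L :: "(coord \<Rightarrow> real) set set" and Xp Xm :: "(coord \<Rightarrow> real) set"
  assumes "N \<ge> 1"
    and "is_triangulation (Pi_set N) T"
    and "i \<in> {1..4}" "j \<in> {1..4}" "k \<in> {1..4}" "i \<noteq> j" "j \<noteq> k" "i \<noteq> k"
    and "\<bar>r\<bar> \<le> int N" "\<bar>s\<bar> \<le> int N" "\<bar>t\<bar> \<le> int N"
    and "T_ijk i j k r s t \<subseteq> T"
    and "is_signed_circuit (Pi_set N) Xp Xm"
    and "Xp \<union> Xm \<noteq> Xp_ijk i j k r s t \<union> Xm_ijk i j k r s t"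
    and "flip_with_link T Xp Xm L"
    and "T' = flip_result T Xp Xm L"
  shows "T_ijk i j k r s t \<subseteq> T'"
proof -
  note d = assms(6-8)
  let ?X = "Xp \<union> Xm"
  have circ: "is_circuit_set (Pi_set N) ?X" using assms(13) by (simp add: is_signed_circuit_def)
  obtain c where c: "\<forall>x\<in>?X. c x \<noteq> 0" "(\<Sum>x\<in>?X. c x) = 0" "(\<Sum>x\<in>?X. c x *\<^sub>R x) = 0"
    "Xp = {x \<in> ?X. c x > 0}" "Xm = {x \<in> ?X. c x < 0}"
    using assms(13) unfolding is_signed_circuit_def by blast
  have XP: "?X \<subseteq> Pi_set N" using circ by (simp add: is_circuit_set_def)
  have fin: "finite ?X" using finite_subset[OF XP finite_Pi] .
  have sums: "\<forall>q. (\<Sum>x\<in>?X. c x * x q) = 0"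
  proof
    fix q
    have "(\<Sum>x\<in>?X. c x *\<^sub>R x) q = 0" using c(3) by simp
    then show "(\<Sum>x\<in>?X. c x * x q) = 0" using sum_fun_apply[OF fin, of c q] by simp
  qed
  have dep: "affine_dependent ?X" using circ by (simp add: is_circuit_set_def)
  have Xne: "?X \<noteq> {}" using dep by auto
  have key: False if sub: "Xm \<subseteq> six i j k r s t"
  proof -
    have "Xm \<noteq> {}"
    proof
      assume "Xm = {}"
      then have pos: "\<forall>x\<in>?X. c x > 0" using c(1,5) by force
      from Xne obtain y where "y \<in> ?X" by blast
      then have "0 < (\<Sum>x\<in>?X. c x)" using pos by (intro sum_pos2[OF fin]) (auto simp: less_imp_le)
      with c(2) show False by simp
    qed
    then obtain m where m: "m \<in> Xm" by blast
    have neg: "\<forall>x\<in>?X. c x < 0 \<longrightarrow> x \<in> six i j k r s t" using c(5) sub by blast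
    have "six i j k r s t \<subseteq> ?X"
      using all_in[OF XP fin d sums c(1) neg, of m] m c(5) sub by blast
    moreover have "six i j k r s t \<noteq> ?X" using assms(14) by simp
    ultimately have "six i j k r s t \<subset> ?X" by blast
    then have "\<not> affine_dependent (six i j k r s t)" using circ by (simp add: is_circuit_set_def)
    with six_dep[OF d] show False by simp
  qed
  show ?thesis
  proof
    fix \<tau> assume \<tau>: "\<tau> \<in> T_ijk i j k r s t"
    then have \<tau>T: "\<tau> \<in> T" using assms(12) by blast
    have \<tau>sub: "\<tau> \<subseteq> six i j k r s t" using \<tau> by (simp add: T_ijk_def T_plus_def)
    show "\<tau> \<in> T'"
    proof (cases "\<exists>\<rho> \<sigma>. \<tau> = \<rho> \<union> \<sigma> \<and> \<rho> \<in> L \<and> \<sigma> \<in> T_plus Xp Xm")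
      case False
      then show ?thesis using \<tau>T assms(16) by (auto simp: flip_result_def)
    next
      case True
      then obtain \<rho> \<sigma> where rs: "\<tau> = \<rho> \<union> \<sigma>" "\<rho> \<in> L" "\<sigma> \<in> T_plus Xp Xm" by blast
      have "\<not> Xm \<subseteq> \<sigma>"
      proof
        assume "Xm \<subseteq> \<sigma>"
        then have "Xm \<subseteq> six i j k r s t" using rs(1) \<tau>sub by blast
        then show False by (rule key)
      qed
      then have "\<sigma> \<in> T_minus Xp Xm" using rs(3) by (simp add: T_plus_def T_minus_def)
      then show ?thesis using rs assms(16) unfolding flip_result_def by blast
    qed
  qed
qed

end
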